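(* Let $\beta=(\pi_\ell)_{\ell=1}^L$ be a chainable architecture. Then for all $1\le q\le s<t\le L$, the patterns $\pi_q*\cdots*\pi_s$ and $\pi_{s+1}*\cdots*\pi_t$ are well defined, the pair $(\pi_q*\cdots*\pi_s,\ \pi_{s+1}*\cdots*\pi_t)$ is chainable, and $$r(\pi_q*\cdots*\pi_s,\ \pi_{s+1}*\cdots*\pi_t)=r(\pi_s,\pi_{s+1}).$$
   Context: A pattern is a tuple $\pi=(a,b,c,d)$ of positive integers. Patterns $\pi=(a,b,c,d),\pi'=(a',b',c',d')$ are chainable if $ac/a'=b'd'/d$, this common value $r(\pi,\pi')$ is an integer, $a\mid a'$ and $d'\mid d$; then $\pi*\pi':=(a,bd/d',a'c'/a,d')$. An architecture $\beta=(\pi_\ell)_{\ell=1}^L$, $\pi_\ell=(a_\ell,b_\ell,c_\ell,d_\ell)$, is a sequence of patterns with $a_\ell c_\ell d_\ell=a_{\ell+1}b_{\ell+1}d_{\ell+1}$; it is chainable if every consecutive pair $(\pi_\ell,\pi_{\ell+1})$ is chainable. $\pi_q*\cdots*\pi_s$ denotes the iterated product $((\pi_q*\pi_{q+1})*\cdots)*\pi_s$ (equal to $\pi_q$ if $q=s$). *)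

theory Defs
  imports Complex_Main
begin

type_synonym pattern = "nat \<times> nat \<times> nat \<times> nat"

definition is_pattern :: "pattern \<Rightarrow> bool" where
  "is_pattern p = (case p of (a,b,c,d) \<Rightarrow> 0 < a \<and> 0 < b \<and> 0 < c \<and> 0 < d)"

definition r_val :: "pattern \<Rightarrow> pattern \<Rightarrow> rat" where
  "r_val p p' = (case p of (a,b,c,d) \<Rightarrow> case p' of (a',b',c',d') \<Rightarrow>
      of_nat a * of_nat c / of_nat a')"

definition chainable :: "pattern \<Rightarrow> pattern \<Rightarrow> bool" where
  "chainable p p' = (case p of (a,b,c,d) \<Rightarrow> case p' of (a',b',c',d') \<Rightarrow>
      (of_nat a * of_nat c / of_nat a' :: rat) = of_nat b' * of_nat d' / of_nat d
      \<and> r_val p p' \<in> \<int> \<and> a dvd a' \<and> d' dvd d)"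

text \<open>B * B' = (a, b d / d', a' c' / a, d'); the divisions are exact for chainable pairs.\<close>
definition pmul :: "pattern \<Rightarrow> pattern \<Rightarrow> pattern" where
  "pmul p p' = (case p of (a,b,c,d) \<Rightarrow> case p' of (a',b',c',d') \<Rightarrow>
      (a, b * d div d', a' * c' div a, d'))"

text \<open>iprod B q k = Some (pi_q * ... * pi_(q+k)) (left-nested), or None if some
  intermediate product is not defined (the pair is not chainable).\<close>
fun iprod :: "(nat \<Rightarrow> pattern) \<Rightarrow> nat \<Rightarrow> nat \<Rightarrow> pattern option" where
  "iprod B q 0 = Some (B q)"
| "iprod B q (Suc k) = (case iprod B q k of None \<Rightarrow> None
     | Some p \<Rightarrow> if chainable p (B (q + Suc k)) then Some (pmul p (B (q + Suc k))) else None)"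

definition architecture :: "(nat \<Rightarrow> pattern) \<Rightarrow> nat \<Rightarrow> bool" where
  "architecture B L = ((\<forall>l\<in>{1..L}. is_pattern (B l)) \<and>
     (\<forall>l. 1 \<le> l \<and> l < L \<longrightarrow>
        (case B l of (a,b,c,d) \<Rightarrow> case B (Suc l) of (a',b',c',d') \<Rightarrow> a * c * d = a' * b' * d')))"

definition chainable_arch :: "(nat \<Rightarrow> pattern) \<Rightarrow> nat \<Rightarrow> bool" where
  "chainable_arch B L = (architecture B L \<and>
     (\<forall>l. 1 \<le> l \<and> l < L \<longrightarrow> chainable (B l) (B (Suc l))))"

end

theory Submission
  imports Defs
begin

definition pa :: "pattern \<Rightarrow> nat" where "pa p = fst p"
definition pb :: "pattern \<Rightarrow> nat" where "pb p = fst (snd p)"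
definition pc :: "pattern \<Rightarrow> nat" where "pc p = fst (snd (snd p))"
definition pd :: "pattern \<Rightarrow> nat" where "pd p = snd (snd (snd p))"

lemma pat_eq: "p = (pa p, pb p, pc p, pd p)"
  by (simp add: pa_def pb_def pc_def pd_def)

lemma r_val_eq: "r_val p p' = of_nat (pa p) * of_nat (pc p) / of_nat (pa p')"
  by (cases p; cases p') (simp add: r_val_def pa_def pc_def)

lemma chainable_eq: "chainable p p' = ((of_nat (pa p) * of_nat (pc p) / of_nat (pa p') :: rat)
   = of_nat (pb p') * of_nat (pd p') / of_nat (pd p) \<and> r_val p p' \<in> \<int>
   \<and> pa p dvd pa p' \<and> pd p' dvd pd p)"
  by (cases p; cases p') (simp add: chainable_def pa_def pb_def pc_def pd_def)

lemma pmul_eq: "pmul p p' = (pa p, pb p * pd p div pd p', pa p' * pc p' div pa p, pd p')"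
  by (cases p; cases p') (simp add: pmul_def pa_def pb_def pc_def pd_def)

lemma pos: "is_pattern p \<Longrightarrow> 0 < pa p \<and> 0 < pb p \<and> 0 < pc p \<and> 0 < pd p"
  by (cases p) (simp add: is_pattern_def pa_def pb_def pc_def pd_def)

lemma iprod_form:
  assumes ch: "chainable_arch B L" and q: "1 \<le> q"
  shows "q + k \<le> L \<Longrightarrow> iprod B q k = Some (pa (B q), pb (B q) * pd (B q) div pd (B (q+k)),
      pa (B (q+k)) * pc (B (q+k)) div pa (B q), pd (B (q+k)))
    \<and> pa (B q) dvd pa (B (q+k)) \<and> pd (B (q+k)) dvd pd (B q)"
proof (induction k)
  case 0
  have "is_pattern (B q)" using ch q 0 unfolding chainable_arch_def architecture_def by auto
  then have "0 < pa (B q)" "0 < pd (B q)" using pos by auto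
  then show ?case by (simp add: pat_eq[symmetric])
next
  case (Suc k)
  let ?P = "(pa (B q), pb (B q) * pd (B q) div pd (B (q+k)),
      pa (B (q+k)) * pc (B (q+k)) div pa (B q), pd (B (q+k)))"
  let ?X = "B (q+k)" and ?Y = "B (q + Suc k)"
  have IH: "iprod B q k = Some ?P" "pa (B q) dvd pa ?X" "pd ?X dvd pd (B q)" using Suc by auto
  have cXY: "chainable ?X ?Y" using ch q Suc.prems unfolding chainable_arch_def by auto
  have pq: "is_pattern (B q)" "is_pattern ?X" "is_pattern ?Y"
    using ch q Suc.prems unfolding chainable_arch_def architecture_def by auto
  have aq: "0 < pa (B q)" and dq: "0 < pd (B q)" and dX: "0 < pd ?X" using pq pos by auto
  have e1: "pa (B q) * (pa ?X * pc ?X div pa (B q)) = pa ?X * pc ?X"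
    using IH(2) by (simp add: dvd_mult2)
  have e2: "pb (B q) * pd (B q) div pd ?X * pd ?X = pb (B q) * pd (B q)"
    using IH(3) by (simp add: dvd_mult)
  have rv: "r_val ?P ?Y = r_val ?X ?Y"
  proof -
    have "(of_nat (pa (B q)) * of_nat (pa ?X * pc ?X div pa (B q)) :: rat) = of_nat (pa ?X) * of_nat (pc ?X)"
      by (metis e1 of_nat_mult)
    then show ?thesis by (simp add: r_val_eq pa_def pc_def)
  qed
  have cPY: "chainable ?P ?Y"
    using cXY rv IH(2,3) unfolding chainable_eq
    by (auto simp add: r_val_eq pa_def pc_def pd_def intro: dvd_trans)
  have pm: "pmul ?P ?Y = (pa (B q), pb (B q) * pd (B q) div pd ?Y,
      pa ?Y * pc ?Y div pa (B q), pd ?Y)"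
    using e2 by (simp add: pmul_eq pa_def pb_def pc_def pd_def)
  have "iprod B q (Suc k) = Some (pmul ?P ?Y)" using IH(1) cPY by simp
  moreover have "pa (B q) dvd pa ?Y" "pd ?Y dvd pd (B q)"
    using cXY IH(2,3) unfolding chainable_eq by (auto intro: dvd_trans)
  ultimately show ?case using pm by simp
qed

theorem lemma4p10:
  fixes B :: "nat \<Rightarrow> pattern" and L q s t :: nat
  assumes "chainable_arch B L"
    and "1 \<le> q" and "q \<le> s" and "s < t" and "t \<le> L"
  shows "\<exists>P Q. iprod B q (s - q) = Some P \<and> iprod B (Suc s) (t - Suc s) = Some Q
           \<and> chainable P Q \<and> r_val P Q = r_val (B s) (B (Suc s))"
proof -
  let ?X = "B s" and ?Y = "B (Suc s)"
  have f1: "iprod B q (s - q) = Some (pa (B q), pb (B q) * pd (B q) div pd ?X,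
      pa ?X * pc ?X div pa (B q), pd ?X)" "pa (B q) dvd pa ?X"
    using iprod_form[OF assms(1) assms(2), of "s - q"] assms by auto
  have f2: "iprod B (Suc s) (t - Suc s) = Some (pa ?Y, pb ?Y * pd ?Y div pd (B t),
      pa (B t) * pc (B t) div pa ?Y, pd (B t))" "pd (B t) dvd pd ?Y"
    using iprod_form[OF assms(1), of "Suc s" "t - Suc s"] assms by auto
  have cXY: "chainable ?X ?Y" using assms unfolding chainable_arch_def by auto
  have pq: "is_pattern (B q)" "is_pattern (B t)"
    using assms unfolding chainable_arch_def architecture_def by auto
  have aq: "0 < pa (B q)" and dt: "0 < pd (B t)" using pq pos by auto
  let ?P = "(pa (B q), pb (B q) * pd (B q) div pd ?X, pa ?X * pc ?X div pa (B q), pd ?X)"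
  let ?Q = "(pa ?Y, pb ?Y * pd ?Y div pd (B t), pa (B t) * pc (B t) div pa ?Y, pd (B t))"
  have e1: "pa (B q) * (pa ?X * pc ?X div pa (B q)) = pa ?X * pc ?X"
    using f1(2) by (simp add: dvd_mult2)
  have e2: "pb ?Y * pd ?Y div pd (B t) * pd (B t) = pb ?Y * pd ?Y"
    using f2(2) by (simp add: dvd_mult)
  have rv: "r_val ?P ?Q = r_val ?X ?Y"
  proof -
    have "(of_nat (pa (B q)) * of_nat (pa ?X * pc ?X div pa (B q)) :: rat) = of_nat (pa ?X) * of_nat (pc ?X)"
      by (metis e1 of_nat_mult)
    then show ?thesis by (simp add: r_val_eq pa_def pc_def)
  qed
  have e2r: "(of_nat (pb ?Y * pd ?Y div pd (B t)) * of_nat (pd (B t)) :: rat) = of_nat (pb ?Y) * of_nat (pd ?Y)"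
    by (metis e2 of_nat_mult)
  have cPQ: "chainable ?P ?Q"
    using cXY rv f1(2) f2(2) e2r unfolding chainable_eq
    by (auto simp add: r_val_eq pa_def pb_def pc_def pd_def intro: dvd_trans)
  show ?thesis using f1(1) f2(1) cPQ rv by blast
qed

end
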